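(* Let $\mathcal{A}\subseteq\mathcal{B}$ be sub-$\sigma$-algebras of a complete probability space $(\Omega,\mathcal{F},P)$, where $\mathcal{B}$ is generated by a countable family of events (together with the $P$-null events). Let $L$ be a linear subspace of $L_\infty(\mathcal{B})$. Let $M:L^+_\infty(\mathcal{B})\to L^+_\infty(\mathcal{A})$ be a regular sublinear operator and $m:L^+_\infty(\mathcal{B})\to L^+_\infty(\mathcal{A})$ a superlinear operator. Let $x:L\to L_\infty(\mathcal{A})$ be a linear operator satisfying \[m(Z)+x(X)\le M(Y)\qquad \text{for all }X\in L,\ Y,Z\in L^+_\infty(\mathcal{B}) \text{ with } Z+X\le Y.\] Then $x$ admits a monotone linear extension $x:L_\infty(\mathcal{B})\to L_\infty(\mathcal{A})$ which is continuous from above and satisfies \[m(Z)+x(X)\le M(Y)\qquad \text{for all }X\in L_\infty(\mathcal{B}),\ Y,Z\in L^+_\infty(\mathcal{B}) \text{ with } Z+X\le Y,\] equivalently $m(X)\le x(X)\le M(X)$ for all $X\in L^+_\infty(\mathcal{B})$.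
   Context: All (in)equalities between random variables hold $P$-a.s. Sublinear: $M(X+Y)\le M(X)+M(Y)$, $M(\lambda X)=\lambda M(X)$ for real $\lambda\ge0$. Superlinear: $m(X+Y)\ge m(X)+m(Y)$, $m(\lambda X)=\lambda m(X)$ for real $\lambda\ge0$. Regular: for every nonincreasing sequence $X_n\downarrow0$ $P$-a.s., $M(X_n)\to0$ $P$-a.s. Monotone: $X\ge X'\Rightarrow x(X)\ge x(X')$. Continuous from above: for every nonincreasing sequence $X_n$ with $P$-a.s. limit $X$, $x(X_n)\downarrow x(X)$ $P$-a.s. *)

theory Defs
  imports "HOL-Probability.Probability"
begin

text \<open>Elements of L_infinity(B) are represented by B-measurable, P-essentially bounded
  real functions; all (in)equalities are understood P-a.s.  Operators on L_infinity are
  represented as maps on functions that respect P-a.s. equality on their domain.\<close>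

definition Linf :: "'a measure \<Rightarrow> 'a measure \<Rightarrow> ('a \<Rightarrow> real) set" where
  "Linf P B = {X. X \<in> borel_measurable B \<and> (\<exists>c. AE \<omega> in P. \<bar>X \<omega>\<bar> \<le> c)}"

definition Linf_pos :: "'a measure \<Rightarrow> 'a measure \<Rightarrow> ('a \<Rightarrow> real) set" where
  "Linf_pos P B = {X \<in> Linf P B. AE \<omega> in P. 0 \<le> X \<omega>}"

definition ae_le :: "'a measure \<Rightarrow> ('a \<Rightarrow> real) \<Rightarrow> ('a \<Rightarrow> real) \<Rightarrow> bool" where
  "ae_le P X Y \<longleftrightarrow> (AE \<omega> in P. X \<omega> \<le> Y \<omega>)"

definition ae_eq :: "'a measure \<Rightarrow> ('a \<Rightarrow> real) \<Rightarrow> ('a \<Rightarrow> real) \<Rightarrow> bool" where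
  "ae_eq P X Y \<longleftrightarrow> (AE \<omega> in P. X \<omega> = Y \<omega>)"

definition op_between :: "'a measure \<Rightarrow> ('a \<Rightarrow> real) set \<Rightarrow> ('a \<Rightarrow> real) set
    \<Rightarrow> (('a \<Rightarrow> real) \<Rightarrow> ('a \<Rightarrow> real)) \<Rightarrow> bool" where
  "op_between P D E T \<longleftrightarrow> (\<forall>X\<in>D. T X \<in> E) \<and>
     (\<forall>X\<in>D. \<forall>Y\<in>D. ae_eq P X Y \<longrightarrow> ae_eq P (T X) (T Y))"

definition sublinear_op :: "'a measure \<Rightarrow> ('a \<Rightarrow> real) set
    \<Rightarrow> (('a \<Rightarrow> real) \<Rightarrow> ('a \<Rightarrow> real)) \<Rightarrow> bool" where
  "sublinear_op P D T \<longleftrightarrow>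
     (\<forall>X\<in>D. \<forall>Y\<in>D. ae_le P (T (\<lambda>\<omega>. X \<omega> + Y \<omega>)) (\<lambda>\<omega>. T X \<omega> + T Y \<omega>)) \<and>
     (\<forall>X\<in>D. \<forall>c::real. c \<ge> 0 \<longrightarrow> ae_eq P (T (\<lambda>\<omega>. c * X \<omega>)) (\<lambda>\<omega>. c * T X \<omega>))"

definition superlinear_op :: "'a measure \<Rightarrow> ('a \<Rightarrow> real) set
    \<Rightarrow> (('a \<Rightarrow> real) \<Rightarrow> ('a \<Rightarrow> real)) \<Rightarrow> bool" where
  "superlinear_op P D T \<longleftrightarrow>
     (\<forall>X\<in>D. \<forall>Y\<in>D. ae_le P (\<lambda>\<omega>. T X \<omega> + T Y \<omega>) (T (\<lambda>\<omega>. X \<omega> + Y \<omega>))) \<and>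
     (\<forall>X\<in>D. \<forall>c::real. c \<ge> 0 \<longrightarrow> ae_eq P (T (\<lambda>\<omega>. c * X \<omega>)) (\<lambda>\<omega>. c * T X \<omega>))"

definition linear_op :: "'a measure \<Rightarrow> ('a \<Rightarrow> real) set
    \<Rightarrow> (('a \<Rightarrow> real) \<Rightarrow> ('a \<Rightarrow> real)) \<Rightarrow> bool" where
  "linear_op P D T \<longleftrightarrow>
     (\<forall>X\<in>D. \<forall>Y\<in>D. ae_eq P (T (\<lambda>\<omega>. X \<omega> + Y \<omega>)) (\<lambda>\<omega>. T X \<omega> + T Y \<omega>)) \<and>
     (\<forall>X\<in>D. \<forall>c::real. ae_eq P (T (\<lambda>\<omega>. c * X \<omega>)) (\<lambda>\<omega>. c * T X \<omega>))"

definition regular_op :: "'a measure \<Rightarrow> ('a \<Rightarrow> real) set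
    \<Rightarrow> (('a \<Rightarrow> real) \<Rightarrow> ('a \<Rightarrow> real)) \<Rightarrow> bool" where
  "regular_op P D T \<longleftrightarrow>
     (\<forall>Xs :: nat \<Rightarrow> 'a \<Rightarrow> real. (\<forall>n. Xs n \<in> D) \<longrightarrow>
        (AE \<omega> in P. decseq (\<lambda>n. Xs n \<omega>) \<and> (\<lambda>n. Xs n \<omega>) \<longlonglongrightarrow> 0) \<longrightarrow>
        (AE \<omega> in P. (\<lambda>n. T (Xs n) \<omega>) \<longlonglongrightarrow> 0))"

definition monotone_op :: "'a measure \<Rightarrow> ('a \<Rightarrow> real) set
    \<Rightarrow> (('a \<Rightarrow> real) \<Rightarrow> ('a \<Rightarrow> real)) \<Rightarrow> bool" where
  "monotone_op P D T \<longleftrightarrow> (\<forall>X\<in>D. \<forall>Y\<in>D. ae_le P Y X \<longrightarrow> ae_le P (T Y) (T X))"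

definition cont_above_op :: "'a measure \<Rightarrow> ('a \<Rightarrow> real) set
    \<Rightarrow> (('a \<Rightarrow> real) \<Rightarrow> ('a \<Rightarrow> real)) \<Rightarrow> bool" where
  "cont_above_op P D T \<longleftrightarrow>
     (\<forall>Xs :: nat \<Rightarrow> 'a \<Rightarrow> real. \<forall>X. (\<forall>n. Xs n \<in> D) \<longrightarrow> X \<in> D \<longrightarrow>
        (AE \<omega> in P. decseq (\<lambda>n. Xs n \<omega>) \<and> (\<lambda>n. Xs n \<omega>) \<longlonglongrightarrow> X \<omega>) \<longrightarrow>
        (AE \<omega> in P. decseq (\<lambda>n. T (Xs n) \<omega>) \<and> (\<lambda>n. T (Xs n) \<omega>) \<longlonglongrightarrow> T X \<omega>))"

definition lin_subspace :: "('a \<Rightarrow> real) set \<Rightarrow> bool" where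
  "lin_subspace L \<longleftrightarrow> (\<lambda>\<omega>. 0) \<in> L \<and>
     (\<forall>X\<in>L. \<forall>Y\<in>L. (\<lambda>\<omega>. X \<omega> + Y \<omega>) \<in> L) \<and>
     (\<forall>X\<in>L. \<forall>c::real. (\<lambda>\<omega>. c * X \<omega>) \<in> L)"

end

theory Submission
  imports Defs
begin


lemma esssup_exists:
  fixes F :: "('a \<Rightarrow> real) set" and P A :: "'a measure"
  assumes ps: "prob_space P" and sub: "subalgebra P A"
    and Fm: "\<forall>f\<in>F. f \<in> borel_measurable A"
    and ub: "\<forall>f\<in>F. AE \<omega> in P. f \<omega> \<le> hi"
    and f0: "f0 \<in> F" and lb: "AE \<omega> in P. lo \<le> f0 \<omega>"
  shows "\<exists>g \<in> borel_measurable A. (\<forall>\<omega>. lo \<le> g \<omega> \<and> g \<omega> \<le> max lo hi) \<and>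
     (\<forall>f\<in>F. AE \<omega> in P. f \<omega> \<le> g \<omega>) \<and>
     (\<forall>h. (\<forall>f\<in>F. AE \<omega> in P. f \<omega> \<le> h \<omega>) \<longrightarrow> (AE \<omega> in P. g \<omega> \<le> h \<omega>))"
proof -
  interpret prob_space P by (rule ps)
  define cl where "cl x = max lo (min hi x)" for x :: real
  define G where "G s \<omega> = (SUP i. cl (s i \<omega>))" for s :: "nat \<Rightarrow> 'a \<Rightarrow> real" and \<omega>
  have clb: "lo \<le> cl x" "cl x \<le> max lo hi" for x unfolding cl_def by auto
  have bdd: "bdd_above (range (\<lambda>i. cl (s i \<omega>)))" for s :: "nat \<Rightarrow> 'a \<Rightarrow> real" and \<omega>
    using clb by (auto intro!: bdd_aboveI)
  have Gup: "cl (s i \<omega>) \<le> G s \<omega>" for s :: "nat \<Rightarrow> 'a \<Rightarrow> real" and i \<omega>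
    unfolding G_def by (rule cSUP_upper[OF _ bdd]) auto
  have Gb: "lo \<le> G s \<omega>" "G s \<omega> \<le> max lo hi" for s :: "nat \<Rightarrow> 'a \<Rightarrow> real" and \<omega>
  proof -
    show "lo \<le> G s \<omega>" using Gup[of s 0 \<omega>] clb[of "s 0 \<omega>"] by linarith
    show "G s \<omega> \<le> max lo hi" unfolding G_def using clb by (auto intro!: cSUP_least)
  qed
  define S where "S = {s :: nat \<Rightarrow> 'a \<Rightarrow> real. \<forall>i. s i \<in> F}"
  have Gm: "G s \<in> borel_measurable A" if "s \<in> S" for s
  proof -
    have "s i \<in> borel_measurable A" for i using that Fm S_def by auto
    then have "(\<lambda>\<omega>. cl (s i \<omega>)) \<in> borel_measurable A" for i unfolding cl_def by measurable
    then show ?thesis unfolding G_def using bdd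
      by (intro borel_measurable_cSUP) auto
  qed
  have GmP: "G s \<in> borel_measurable P" if "s \<in> S" for s
    using measurable_from_subalg[OF sub Gm[OF that]] .
  have Gi: "integrable P (G s)" if "s \<in> S" for s
  proof (rule integrable_const_bound[where B="\<bar>lo\<bar> + \<bar>hi\<bar>"])
    show "AE x in P. norm (G s x) \<le> \<bar>lo\<bar> + \<bar>hi\<bar>" using Gb[of s] by (auto simp: abs_le_iff intro!: always_eventually) (smt (verit) Gb)+
  qed (rule GmP[OF that])
  define V where "V s = integral\<^sup>L P (G s)" for s
  have Vle: "V s \<le> max lo hi" if "s \<in> S" for s
    unfolding V_def using Gi[OF that] Gb by (intro integral_le_const) auto
  have S0: "(\<lambda>i. f0) \<in> S" using f0 S_def by auto
  define vs where "vs = Sup (V ` S)"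
  have bddV: "bdd_above (V ` S)" using Vle by (auto intro!: bdd_aboveI)
  have Vvs: "V s \<le> vs" if "s \<in> S" for s unfolding vs_def using bddV that by (intro cSup_upper) auto
  have "\<forall>k. \<exists>s\<in>S. vs - inverse (real (Suc k)) < V s"
  proof
    fix k
    have "vs - inverse (real (Suc k)) < vs" by simp
    then show "\<exists>s\<in>S. vs - inverse (real (Suc k)) < V s"
      unfolding vs_def using S0 bddV by (subst (asm) less_cSup_iff) auto
  qed
  then obtain sk where sk: "\<And>k. sk k \<in> S" "\<And>k. vs - inverse (real (Suc k)) < V (sk k)"
    by metis
  define sa where "sa n = sk (fst (prod_decode n)) (snd (prod_decode n))" for n
  have saS: "sa \<in> S" using sk(1) unfolding sa_def S_def by auto
  have "G (sk k) \<omega> \<le> G sa \<omega>" for k \<omega>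
  proof -
    have "cl (sk k i \<omega>) \<le> G sa \<omega>" for i
      using Gup[of sa "prod_encode (k,i)" \<omega>] unfolding sa_def by simp
    then show ?thesis unfolding G_def by (intro cSUP_least) auto
  qed
  then have skle: "V (sk k) \<le> V sa" for k unfolding V_def
    using Gi saS sk(1) by (intro integral_mono) auto
  have Vsa: "V sa = vs"
  proof (rule ccontr)
    assume "V sa \<noteq> vs"
    then have "0 < vs - V sa" using Vvs[OF saS] by simp
    then obtain k where "inverse (real (Suc k)) < vs - V sa" using reals_Archimedean by blast
    then show False using sk(2)[of k] skle[of k] by simp
  qed
  show ?thesis
  proof (intro bexI conjI allI ballI impI)
    show "G sa \<in> borel_measurable A" by (rule Gm[OF saS])
    show "lo \<le> G sa \<omega>" "G sa \<omega> \<le> max lo hi" for \<omega> using Gb by auto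
  next
    fix f assume fF: "f \<in> F"
    define s' where "s' n = (case n of 0 \<Rightarrow> f | Suc n \<Rightarrow> sa n)" for n
    have s'S: "s' \<in> S" using saS fF unfolding S_def s'_def by (auto split: nat.splits)
    have le1: "G sa \<omega> \<le> G s' \<omega>" for \<omega>
    proof -
      have "cl (sa i \<omega>) \<le> G s' \<omega>" for i using Gup[of s' "Suc i" \<omega>] by (simp add: s'_def)
      then show ?thesis unfolding G_def by (intro cSUP_least) auto
    qed
    have le2: "cl (f \<omega>) \<le> G s' \<omega>" for \<omega> using Gup[of s' 0 \<omega>] by (simp add: s'_def)
    have "V s' - V sa \<le> 0" using Vvs[OF s'S] Vsa by simp
    moreover have "V s' - V sa = integral\<^sup>L P (\<lambda>\<omega>. G s' \<omega> - G sa \<omega>)"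
      unfolding V_def using Gi[OF s'S] Gi[OF saS] by simp
    moreover have "0 \<le> integral\<^sup>L P (\<lambda>\<omega>. G s' \<omega> - G sa \<omega>)"
      using le1 by (intro integral_nonneg_AE) auto
    ultimately have "integral\<^sup>L P (\<lambda>\<omega>. G s' \<omega> - G sa \<omega>) = 0" by simp
    then have "AE \<omega> in P. G s' \<omega> - G sa \<omega> = 0"
      using Gi[OF s'S] Gi[OF saS] le1 by (subst (asm) integral_nonneg_eq_0_iff_AE) auto
    moreover have "AE \<omega> in P. f \<omega> \<le> hi" using ub fF by auto
    ultimately show "AE \<omega> in P. f \<omega> \<le> G sa \<omega>"
    proof eventually_elim
      case (elim \<omega>)
      then show ?case using le2[of \<omega>] unfolding cl_def by (auto split: if_splits)
    qed
  next
    fix h assume hyp: "\<forall>f\<in>F. AE \<omega> in P. f \<omega> \<le> h \<omega>"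
    have "AE \<omega> in P. \<forall>i. sa i \<omega> \<le> h \<omega>" using saS hyp unfolding S_def
      by (subst AE_all_countable) auto
    moreover have "AE \<omega> in P. f0 \<omega> \<le> h \<omega>" using hyp f0 by auto
    ultimately show "AE \<omega> in P. G sa \<omega> \<le> h \<omega>" using lb
    proof eventually_elim
      case (elim \<omega>)
      then have "cl (sa i \<omega>) \<le> h \<omega>" for i unfolding cl_def by (smt (verit))
      then show ?case unfolding G_def by (intro cSUP_least) auto
    qed
  qed
qed




lemma Linf_add: "X \<in> Linf P N \<Longrightarrow> Y \<in> Linf P N \<Longrightarrow> (\<lambda>\<omega>. X \<omega> + Y \<omega>) \<in> Linf P N"
proof -
  assume a: "X \<in> Linf P N" "Y \<in> Linf P N"
  then obtain c1 c2 where "AE \<omega> in P. \<bar>X \<omega>\<bar> \<le> c1" "AE \<omega> in P. \<bar>Y \<omega>\<bar> \<le> c2" unfolding Linf_def by auto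
  then have "AE \<omega> in P. \<bar>X \<omega> + Y \<omega>\<bar> \<le> c1 + c2" by eventually_elim auto
  then show ?thesis using a unfolding Linf_def by auto
qed

lemma Linf_diff: "X \<in> Linf P N \<Longrightarrow> Y \<in> Linf P N \<Longrightarrow> (\<lambda>\<omega>. X \<omega> - Y \<omega>) \<in> Linf P N"
proof -
  assume a: "X \<in> Linf P N" "Y \<in> Linf P N"
  then obtain c1 c2 where "AE \<omega> in P. \<bar>X \<omega>\<bar> \<le> c1" "AE \<omega> in P. \<bar>Y \<omega>\<bar> \<le> c2" unfolding Linf_def by auto
  then have "AE \<omega> in P. \<bar>X \<omega> - Y \<omega>\<bar> \<le> c1 + c2" by eventually_elim auto
  then show ?thesis using a unfolding Linf_def by auto
qed

lemma Linf_scale: "X \<in> Linf P N \<Longrightarrow> (\<lambda>\<omega>. c * X \<omega>) \<in> Linf P N"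
proof -
  assume a: "X \<in> Linf P N"
  then obtain c1 where "AE \<omega> in P. \<bar>X \<omega>\<bar> \<le> c1" unfolding Linf_def by auto
  then have "AE \<omega> in P. \<bar>c * X \<omega>\<bar> \<le> \<bar>c\<bar> * c1" by eventually_elim (auto simp: abs_mult mult_left_mono)
  then show ?thesis using a unfolding Linf_def by auto
qed

lemma Linf_const: "(\<lambda>\<omega>. c) \<in> Linf P N"
  unfolding Linf_def by auto

lemma Linf_max0: "X \<in> Linf P N \<Longrightarrow> (\<lambda>\<omega>. max 0 (X \<omega>)) \<in> Linf_pos P N"
proof -
  assume a: "X \<in> Linf P N"
  then obtain c1 where "AE \<omega> in P. \<bar>X \<omega>\<bar> \<le> c1" unfolding Linf_def by auto
  then have "AE \<omega> in P. \<bar>max 0 (X \<omega>)\<bar> \<le> c1" by eventually_elim auto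
  then show ?thesis using a unfolding Linf_def Linf_pos_def by auto
qed

lemma Linf_pos_add: "X \<in> Linf_pos P N \<Longrightarrow> Y \<in> Linf_pos P N \<Longrightarrow> (\<lambda>\<omega>. X \<omega> + Y \<omega>) \<in> Linf_pos P N"
  unfolding Linf_pos_def by (auto intro: Linf_add elim!: eventually_elim2)

lemma Linf_pos_scale: "X \<in> Linf_pos P N \<Longrightarrow> 0 \<le> c \<Longrightarrow> (\<lambda>\<omega>. c * X \<omega>) \<in> Linf_pos P N"
  unfolding Linf_pos_def by (auto intro: Linf_scale elim!: eventually_mono)

lemma Linf_pos_zero: "(\<lambda>\<omega>. 0) \<in> Linf_pos P N"
  unfolding Linf_pos_def by (auto intro: Linf_const)

lemma Linf_pos_Linf: "X \<in> Linf_pos P N \<Longrightarrow> X \<in> Linf P N"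
  unfolding Linf_pos_def by auto

lemma Linf_meas: "X \<in> Linf P N \<Longrightarrow> X \<in> borel_measurable N"
  unfolding Linf_def by auto

lemma Linf_bnd: "X \<in> Linf P N \<Longrightarrow> \<exists>c. AE \<omega> in P. \<bar>X \<omega>\<bar> \<le> c"
  unfolding Linf_def by auto

lemma Linf_pos_nn: "X \<in> Linf_pos P N \<Longrightarrow> AE \<omega> in P. 0 \<le> X \<omega>"
  unfolding Linf_pos_def by auto

lemma Linf_posI: "X \<in> Linf P N \<Longrightarrow> AE \<omega> in P. 0 \<le> X \<omega> \<Longrightarrow> X \<in> Linf_pos P N"
  unfolding Linf_pos_def by auto

lemma ae_eq_refl: "ae_eq P X X" unfolding ae_eq_def by auto
lemma ae_eq_sym: "ae_eq P X Y \<Longrightarrow> ae_eq P Y X" unfolding ae_eq_def by (auto elim: eventually_mono)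
lemma ae_eq_trans: "ae_eq P X Y \<Longrightarrow> ae_eq P Y Z \<Longrightarrow> ae_eq P X Z" unfolding ae_eq_def
  by (auto elim: eventually_elim2)




locale setting =
  fixes P A B :: "'a measure" and L :: "('a \<Rightarrow> real) set"
    and Mop mop x :: "('a \<Rightarrow> real) \<Rightarrow> ('a \<Rightarrow> real)"
  assumes ps: "prob_space P" and subA: "subalgebra P A" and subB: "subalgebra P B"
    and Lsub: "lin_subspace L" and LLinf: "L \<subseteq> Linf P B"
    and Mb: "op_between P (Linf_pos P B) (Linf_pos P A) Mop"
    and Msub: "sublinear_op P (Linf_pos P B) Mop" and Mreg: "regular_op P (Linf_pos P B) Mop"
    and mb: "op_between P (Linf_pos P B) (Linf_pos P A) mop"
    and msup: "superlinear_op P (Linf_pos P B) mop"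
    and xb: "op_between P L (Linf P A) x" and xlin: "linear_op P L x"
    and hyp: "\<forall>X\<in>L. \<forall>Y\<in>Linf_pos P B. \<forall>Z\<in>Linf_pos P B.
           ae_le P (\<lambda>\<omega>. Z \<omega> + X \<omega>) Y \<longrightarrow> ae_le P (\<lambda>\<omega>. mop Z \<omega> + x X \<omega>) (Mop Y)"
begin

lemma M_val: "Y \<in> Linf_pos P B \<Longrightarrow> Mop Y \<in> Linf_pos P A"
  using Mb unfolding op_between_def by auto
lemma m_val: "Y \<in> Linf_pos P B \<Longrightarrow> mop Y \<in> Linf_pos P A"
  using mb unfolding op_between_def by auto
lemma M_cong: "Y1 \<in> Linf_pos P B \<Longrightarrow> Y2 \<in> Linf_pos P B \<Longrightarrow> ae_eq P Y1 Y2 \<Longrightarrow> ae_eq P (Mop Y1) (Mop Y2)"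
  using Mb unfolding op_between_def by auto
lemma m_cong: "Y1 \<in> Linf_pos P B \<Longrightarrow> Y2 \<in> Linf_pos P B \<Longrightarrow> ae_eq P Y1 Y2 \<Longrightarrow> ae_eq P (mop Y1) (mop Y2)"
  using mb unfolding op_between_def by auto
lemma M_add: "Y1 \<in> Linf_pos P B \<Longrightarrow> Y2 \<in> Linf_pos P B \<Longrightarrow>
   AE \<omega> in P. Mop (\<lambda>\<omega>. Y1 \<omega> + Y2 \<omega>) \<omega> \<le> Mop Y1 \<omega> + Mop Y2 \<omega>"
  using Msub unfolding sublinear_op_def ae_le_def by auto
lemma m_add: "Y1 \<in> Linf_pos P B \<Longrightarrow> Y2 \<in> Linf_pos P B \<Longrightarrow>
   AE \<omega> in P. mop Y1 \<omega> + mop Y2 \<omega> \<le> mop (\<lambda>\<omega>. Y1 \<omega> + Y2 \<omega>) \<omega>"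
  using msup unfolding superlinear_op_def ae_le_def by auto
lemma M_hom: "Y \<in> Linf_pos P B \<Longrightarrow> 0 \<le> c \<Longrightarrow>
   AE \<omega> in P. Mop (\<lambda>\<omega>. c * Y \<omega>) \<omega> = c * Mop Y \<omega>"
  using Msub unfolding sublinear_op_def ae_eq_def by auto
lemma m_hom: "Y \<in> Linf_pos P B \<Longrightarrow> 0 \<le> c \<Longrightarrow>
   AE \<omega> in P. mop (\<lambda>\<omega>. c * Y \<omega>) \<omega> = c * mop Y \<omega>"
  using msup unfolding superlinear_op_def ae_eq_def by auto

lemma Linf_A_meas: "f \<in> Linf P A \<Longrightarrow> f \<in> borel_measurable A"
  by (rule Linf_meas)

definition sandw :: "('a \<Rightarrow> real) set \<Rightarrow> (('a \<Rightarrow> real) \<Rightarrow> ('a \<Rightarrow> real)) \<Rightarrow> bool" where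
  "sandw D T \<longleftrightarrow> (\<forall>X\<in>D. \<forall>Y\<in>Linf_pos P B. \<forall>Z\<in>Linf_pos P B.
     ae_le P (\<lambda>\<omega>. Z \<omega> + X \<omega>) Y \<longrightarrow> ae_le P (\<lambda>\<omega>. mop Z \<omega> + T X \<omega>) (Mop Y))"

definition ext_ok :: "('a \<Rightarrow> real) set \<Rightarrow> (('a \<Rightarrow> real) \<Rightarrow> ('a \<Rightarrow> real)) \<Rightarrow> bool" where
  "ext_ok D T \<longleftrightarrow> L \<subseteq> D \<and> D \<subseteq> Linf P B \<and> lin_subspace D \<and>
     (\<forall>W\<in>Linf P B. \<forall>d\<in>D. ae_eq P W d \<longrightarrow> W \<in> D) \<and>
     op_between P D (Linf P A) T \<and> linear_op P D T \<and> (\<forall>X\<in>L. ae_eq P (T X) (x X)) \<and> sandw D T"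

lemma aux_pos: "0 < (s::real) \<Longrightarrow> a \<le> 1/s * k \<Longrightarrow> s * a \<le> k"
  by (simp add: field_simps)
lemma aux_pos2: "0 < (s::real) \<Longrightarrow> 1/s * k \<le> a \<Longrightarrow> k \<le> s * a"
  by (simp add: field_simps)

lemma one_step:
  assumes ok: "ext_ok D T" and X0: "X0 \<in> Linf P B" and nX0: "X0 \<notin> D"
  shows "\<exists>D' T'. ext_ok D' T' \<and> D \<subseteq> D' \<and> X0 \<in> D' \<and> (\<forall>X\<in>D. T' X = T X)"
proof -
  interpret prob_space P by (rule ps)
  have LD: "L \<subseteq> D" and DB: "D \<subseteq> Linf P B" and Dsub: "lin_subspace D"
    and sat: "\<And>W d. W \<in> Linf P B \<Longrightarrow> d \<in> D \<Longrightarrow> ae_eq P W d \<Longrightarrow> W \<in> D"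
    and Tb: "op_between P D (Linf P A) T" and Tlin: "linear_op P D T"
    and TL: "\<forall>X\<in>L. ae_eq P (T X) (x X)" and Tsw: "sandw D T"
    using ok unfolding ext_ok_def by auto
  have D0: "(\<lambda>\<omega>. 0) \<in> D" and Dadd: "\<And>X Y. X \<in> D \<Longrightarrow> Y \<in> D \<Longrightarrow> (\<lambda>\<omega>. X \<omega> + Y \<omega>) \<in> D"
    and Dsc: "\<And>X c. X \<in> D \<Longrightarrow> (\<lambda>\<omega>. c * X \<omega>) \<in> D"
    using Dsub unfolding lin_subspace_def by auto
  have Tval: "\<And>d. d \<in> D \<Longrightarrow> T d \<in> Linf P A"
    and Tcong: "\<And>d1 d2. d1 \<in> D \<Longrightarrow> d2 \<in> D \<Longrightarrow> ae_eq P d1 d2 \<Longrightarrow> ae_eq P (T d1) (T d2)"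
    using Tb unfolding op_between_def by auto
  have Tadd: "\<And>d1 d2. d1 \<in> D \<Longrightarrow> d2 \<in> D \<Longrightarrow> AE \<omega> in P. T (\<lambda>\<omega>. d1 \<omega> + d2 \<omega>) \<omega> = T d1 \<omega> + T d2 \<omega>"
    and Tsc: "\<And>d c. d \<in> D \<Longrightarrow> AE \<omega> in P. T (\<lambda>\<omega>. c * d \<omega>) \<omega> = c * T d \<omega>"
    using Tlin unfolding linear_op_def ae_eq_def by auto
  have TswI: "\<And>X Y Z. X \<in> D \<Longrightarrow> Y \<in> Linf_pos P B \<Longrightarrow> Z \<in> Linf_pos P B \<Longrightarrow>
     AE \<omega> in P. Z \<omega> + X \<omega> \<le> Y \<omega> \<Longrightarrow> AE \<omega> in P. mop Z \<omega> + T X \<omega> \<le> Mop Y \<omega>"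
    using Tsw unfolding sandw_def ae_le_def by auto
  define Lo where "Lo = {f. \<exists>Z Y d. Z \<in> Linf_pos P B \<and> Y \<in> Linf_pos P B \<and> d \<in> D \<and>
     (AE \<omega> in P. Z \<omega> + d \<omega> - X0 \<omega> \<le> Y \<omega>) \<and> f = (\<lambda>\<omega>. mop Z \<omega> + T d \<omega> - Mop Y \<omega>)}"
  define Up where "Up = {f. \<exists>Z Y d. Z \<in> Linf_pos P B \<and> Y \<in> Linf_pos P B \<and> d \<in> D \<and>
     (AE \<omega> in P. Z \<omega> + d \<omega> + X0 \<omega> \<le> Y \<omega>) \<and> f = (\<lambda>\<omega>. Mop Y \<omega> - mop Z \<omega> - T d \<omega>)}"
  have LoUp: "AE \<omega> in P. l \<omega> \<le> u \<omega>" if lL: "l \<in> Lo" and uU: "u \<in> Up" for l u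
  proof -
    obtain Z1 Y1 d1 where 1: "Z1 \<in> Linf_pos P B" "Y1 \<in> Linf_pos P B" "d1 \<in> D"
      "AE \<omega> in P. Z1 \<omega> + d1 \<omega> - X0 \<omega> \<le> Y1 \<omega>" "l = (\<lambda>\<omega>. mop Z1 \<omega> + T d1 \<omega> - Mop Y1 \<omega>)"
      using lL unfolding Lo_def by blast
    obtain Z2 Y2 d2 where 2: "Z2 \<in> Linf_pos P B" "Y2 \<in> Linf_pos P B" "d2 \<in> D"
      "AE \<omega> in P. Z2 \<omega> + d2 \<omega> + X0 \<omega> \<le> Y2 \<omega>" "u = (\<lambda>\<omega>. Mop Y2 \<omega> - mop Z2 \<omega> - T d2 \<omega>)"
      using uU unfolding Up_def by blast
    have "AE \<omega> in P. (\<lambda>\<omega>. Z1 \<omega> + Z2 \<omega>) \<omega> + (\<lambda>\<omega>. d1 \<omega> + d2 \<omega>) \<omega> \<le> (\<lambda>\<omega>. Y1 \<omega> + Y2 \<omega>) \<omega>"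
      using 1(4) 2(4) by eventually_elim auto
    then have "AE \<omega> in P. mop (\<lambda>\<omega>. Z1 \<omega> + Z2 \<omega>) \<omega> + T (\<lambda>\<omega>. d1 \<omega> + d2 \<omega>) \<omega> \<le> Mop (\<lambda>\<omega>. Y1 \<omega> + Y2 \<omega>) \<omega>"
      using 1 2 by (intro TswI Dadd Linf_pos_add) auto
    moreover note m_add[OF 1(1) 2(1)] M_add[OF 1(2) 2(2)] Tadd[OF 1(3) 2(3)]
    ultimately show ?thesis unfolding 1(5) 2(5) by eventually_elim auto
  qed
  have Lo_A: "l \<in> Linf P A" if "l \<in> Lo" for l
    using that unfolding Lo_def
    by (auto intro!: Linf_diff Linf_add Tval Linf_pos_Linf[OF M_val] Linf_pos_Linf[OF m_val])
  have Up_A: "u \<in> Linf P A" if "u \<in> Up" for u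
    using that unfolding Up_def
    by (auto intro!: Linf_diff Linf_add Tval Linf_pos_Linf[OF M_val] Linf_pos_Linf[OF m_val])
  define Yp where "Yp = (\<lambda>\<omega>. max 0 (X0 \<omega>))"
  define Yn where "Yn = (\<lambda>\<omega>. max 0 ((\<lambda>\<omega>. - X0 \<omega>) \<omega>))"
  have mX0: "(\<lambda>\<omega>. - X0 \<omega>) \<in> Linf P B" using Linf_scale[OF X0, of "-1"] by simp
  have Yp: "Yp \<in> Linf_pos P B" unfolding Yp_def by (rule Linf_max0[OF X0])
  have Yn: "Yn \<in> Linf_pos P B" unfolding Yn_def by (rule Linf_max0[OF mX0])
  define u0 where "u0 = (\<lambda>\<omega>. Mop Yp \<omega> - mop (\<lambda>\<omega>. 0) \<omega> - T (\<lambda>\<omega>. 0) \<omega>)"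
  define l0 where "l0 = (\<lambda>\<omega>. mop (\<lambda>\<omega>. 0) \<omega> + T (\<lambda>\<omega>. 0) \<omega> - Mop Yn \<omega>)"
  have u0: "u0 \<in> Up" unfolding Up_def u0_def using Yp D0 Linf_pos_zero
    by (intro CollectI exI[of _ "\<lambda>\<omega>. 0"] exI[of _ Yp]) (auto simp: Yp_def)
  have l0: "l0 \<in> Lo" unfolding Lo_def l0_def using Yn D0 Linf_pos_zero
    by (intro CollectI exI[of _ "\<lambda>\<omega>. 0"] exI[of _ Yn]) (auto simp: Yn_def)
  obtain cu where cu: "AE \<omega> in P. \<bar>u0 \<omega>\<bar> \<le> cu" using Linf_bnd[OF Up_A[OF u0]] by auto
  obtain cl where cl: "AE \<omega> in P. \<bar>l0 \<omega>\<bar> \<le> cl" using Linf_bnd[OF Lo_A[OF l0]] by auto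
  have "\<forall>f\<in>Lo. AE \<omega> in P. f \<omega> \<le> cu"
  proof
    fix f assume "f \<in> Lo"
    from LoUp[OF this u0] cu show "AE \<omega> in P. f \<omega> \<le> cu" by eventually_elim auto
  qed
  moreover have "AE \<omega> in P. - cl \<le> l0 \<omega>" using cl by eventually_elim auto
  ultimately obtain t where tA: "t \<in> borel_measurable A" and tb: "\<forall>\<omega>. - cl \<le> t \<omega> \<and> t \<omega> \<le> max (- cl) cu"
    and tlo: "\<forall>f\<in>Lo. AE \<omega> in P. f \<omega> \<le> t \<omega>"
    and tmin: "\<forall>h. (\<forall>f\<in>Lo. AE \<omega> in P. f \<omega> \<le> h \<omega>) \<longrightarrow> (AE \<omega> in P. t \<omega> \<le> h \<omega>)"
    using esssup_exists[OF ps subA, of Lo cu l0 "- cl"] Lo_A Linf_meas l0 by blast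
  have tup: "AE \<omega> in P. t \<omega> \<le> u \<omega>" if "u \<in> Up" for u
    using tmin LoUp[OF _ that] by blast
  have tL: "t \<in> Linf P A"
  proof -
    have "\<forall>\<omega>. \<bar>t \<omega>\<bar> \<le> \<bar>cl\<bar> + \<bar>cu\<bar>" using tb by (smt (verit))
    then show ?thesis unfolding Linf_def using tA by auto
  qed

  have uniq: "s1 = s2 \<and> ae_eq P d1 d2" if d1: "d1 \<in> D" and d2: "d2 \<in> D"
    and e: "ae_eq P (\<lambda>\<omega>. d1 \<omega> + s1 * X0 \<omega>) (\<lambda>\<omega>. d2 \<omega> + s2 * X0 \<omega>)" for d1 d2 s1 s2
  proof -
    have ss: "s1 = s2"
    proof (rule ccontr)
      assume ne: "s1 \<noteq> s2"
      define e where "e = (\<lambda>\<omega>. (1 / (s1 - s2)) * (\<lambda>\<omega>. d2 \<omega> + (\<lambda>\<omega>. (-1) * d1 \<omega>) \<omega>) \<omega>)"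
      have eD: "e \<in> D" unfolding e_def using d1 d2 by (intro Dsc Dadd) auto
      have "ae_eq P X0 e" using e unfolding ae_eq_def e_def
        by eventually_elim (use ne in \<open>auto simp: field_simps\<close>)
      then have "X0 \<in> D" using sat[OF X0 eD] by simp
      then show False using nX0 by simp
    qed
    moreover have "ae_eq P d1 d2" using e unfolding ae_eq_def by eventually_elim (use ss in auto)
    ultimately show ?thesis by simp
  qed
  define D' where "D' = {W \<in> Linf P B. \<exists>d\<in>D. \<exists>s. ae_eq P W (\<lambda>\<omega>. d \<omega> + s * X0 \<omega>)}"
  define rep where "rep W = (SOME p. fst p \<in> D \<and> ae_eq P W (\<lambda>\<omega>. fst p \<omega> + snd p * X0 \<omega>))" for W
  have repP: "fst (rep W) \<in> D \<and> ae_eq P W (\<lambda>\<omega>. fst (rep W) \<omega> + snd (rep W) * X0 \<omega>)" if "W \<in> D'" for W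
  proof -
    from that obtain d s where "d \<in> D" "ae_eq P W (\<lambda>\<omega>. d \<omega> + s * X0 \<omega>)" unfolding D'_def by blast
    then have "\<exists>p. fst p \<in> D \<and> ae_eq P W (\<lambda>\<omega>. fst p \<omega> + snd p * X0 \<omega>)" by (intro exI[of _ "(d,s)"]) auto
    then show ?thesis unfolding rep_def by (rule someI_ex)
  qed
  define T' where "T' W = (if W \<in> D then T W else (\<lambda>\<omega>. T (fst (rep W)) \<omega> + snd (rep W) * t \<omega>))" for W
  have DD': "D \<subseteq> D'"
  proof
    fix W assume "W \<in> D"
    then show "W \<in> D'" unfolding D'_def using DB by (auto intro!: bexI[of _ W] exI[of _ 0] ae_eq_refl)
  qed
  have T'rep: "ae_eq P (T' W) (\<lambda>\<omega>. T d \<omega> + s * t \<omega>)"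
    if W: "W \<in> D'" and d: "d \<in> D" and e: "ae_eq P W (\<lambda>\<omega>. d \<omega> + s * X0 \<omega>)" for W d s
  proof (cases "W \<in> D")
    case True
    have w0: "ae_eq P (\<lambda>\<omega>. W \<omega> + 0 * X0 \<omega>) W" by (simp add: ae_eq_refl)
    have "0 = s \<and> ae_eq P W d" by (rule uniq[OF True d ae_eq_trans[OF w0 e]])
    then have "ae_eq P (T W) (T d)" "s = 0" using Tcong[OF True d] by auto
    then show ?thesis using True unfolding T'_def by simp
  next
    case False
    have r: "fst (rep W) \<in> D" "ae_eq P W (\<lambda>\<omega>. fst (rep W) \<omega> + snd (rep W) * X0 \<omega>)" using repP[OF W] by auto
    have "snd (rep W) = s \<and> ae_eq P (fst (rep W)) d"
      using uniq[OF r(1) d] ae_eq_trans[OF ae_eq_sym[OF r(2)] e] by blast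
    then have "snd (rep W) = s" "ae_eq P (T (fst (rep W))) (T d)" using Tcong[OF r(1) d] by auto
    then show ?thesis using False unfolding T'_def ae_eq_def by (auto elim: eventually_mono)
  qed
  have X0D': "X0 \<in> D'" unfolding D'_def using X0 D0
    by (auto intro!: bexI[of _ "\<lambda>\<omega>. 0"] exI[of _ 1] ae_eq_refl)
  have D'B: "D' \<subseteq> Linf P B" unfolding D'_def by auto
  have D'E: "\<exists>d s. d \<in> D \<and> ae_eq P W (\<lambda>\<omega>. d \<omega> + s * X0 \<omega>)" if "W \<in> D'" for W
    using that unfolding D'_def by blast
  have D'I: "W \<in> D'" if "W \<in> Linf P B" "d \<in> D" "ae_eq P W (\<lambda>\<omega>. d \<omega> + s * X0 \<omega>)" for W d s
    using that unfolding D'_def by blast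
  have D'add: "(\<lambda>\<omega>. W1 \<omega> + W2 \<omega>) \<in> D' \<and>
      ae_eq P (\<lambda>\<omega>. W1 \<omega> + W2 \<omega>) (\<lambda>\<omega>. (\<lambda>\<omega>. d1 \<omega> + d2 \<omega>) \<omega> + (s1 + s2) * X0 \<omega>)"
    if "W1 \<in> D'" "W2 \<in> D'" "d1 \<in> D" "d2 \<in> D" "ae_eq P W1 (\<lambda>\<omega>. d1 \<omega> + s1 * X0 \<omega>)"
      "ae_eq P W2 (\<lambda>\<omega>. d2 \<omega> + s2 * X0 \<omega>)" for W1 W2 d1 d2 s1 s2
  proof -
    have e: "ae_eq P (\<lambda>\<omega>. W1 \<omega> + W2 \<omega>) (\<lambda>\<omega>. (\<lambda>\<omega>. d1 \<omega> + d2 \<omega>) \<omega> + (s1 + s2) * X0 \<omega>)"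
      using that(5,6) unfolding ae_eq_def by eventually_elim (auto simp: algebra_simps)
    moreover have "(\<lambda>\<omega>. W1 \<omega> + W2 \<omega>) \<in> D'"
      using that D'B by (intro D'I[OF _ _ e] Linf_add Dadd) auto
    ultimately show ?thesis by simp
  qed
  have D'sc: "(\<lambda>\<omega>. c * W \<omega>) \<in> D' \<and>
      ae_eq P (\<lambda>\<omega>. c * W \<omega>) (\<lambda>\<omega>. (\<lambda>\<omega>. c * d \<omega>) \<omega> + (c * s) * X0 \<omega>)"
    if "W \<in> D'" "d \<in> D" "ae_eq P W (\<lambda>\<omega>. d \<omega> + s * X0 \<omega>)" for W d s c
  proof -
    have e: "ae_eq P (\<lambda>\<omega>. c * W \<omega>) (\<lambda>\<omega>. (\<lambda>\<omega>. c * d \<omega>) \<omega> + (c * s) * X0 \<omega>)"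
      using that(3) unfolding ae_eq_def by eventually_elim (auto simp: algebra_simps)
    moreover have "(\<lambda>\<omega>. c * W \<omega>) \<in> D'"
      using that D'B by (intro D'I[OF _ _ e] Linf_scale Dsc) auto
    ultimately show ?thesis by simp
  qed
  have T'val: "T' W \<in> Linf P A" if "W \<in> D'" for W
  proof (cases "W \<in> D")
    case True then show ?thesis unfolding T'_def using Tval by simp
  next
    case False then show ?thesis unfolding T'_def using repP[OF that] Tval tL
      by (auto intro!: Linf_add Linf_scale)
  qed
  have ext': "ext_ok D' T'"
    unfolding ext_ok_def
  proof (intro conjI)
    show "L \<subseteq> D'" using LD DD' by auto
    show "D' \<subseteq> Linf P B" by (rule D'B)
    show "lin_subspace D'" unfolding lin_subspace_def
    proof (intro conjI ballI allI)
      show "(\<lambda>\<omega>. 0) \<in> D'" using DD' D0 by auto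
    next
      fix W1 W2 assume "W1 \<in> D'" "W2 \<in> D'"
      then show "(\<lambda>\<omega>. W1 \<omega> + W2 \<omega>) \<in> D'" using D'add D'E by metis
    next
      fix W c assume "W \<in> D'"
      then show "(\<lambda>\<omega>. c * W \<omega>) \<in> D'" using D'sc D'E by metis
    qed
    show "\<forall>W\<in>Linf P B. \<forall>d\<in>D'. ae_eq P W d \<longrightarrow> W \<in> D'"
    proof (intro ballI impI)
      fix W W' assume "W \<in> Linf P B" "W' \<in> D'" "ae_eq P W W'"
      then show "W \<in> D'" using D'E[of W'] D'I ae_eq_trans by metis
    qed
    show "op_between P D' (Linf P A) T'" unfolding op_between_def
    proof (intro conjI ballI impI)
      fix W assume "W \<in> D'" then show "T' W \<in> Linf P A" by (rule T'val)
    next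
      fix W1 W2 assume a: "W1 \<in> D'" "W2 \<in> D'" "ae_eq P W1 W2"
      obtain d s where ds: "d \<in> D" "ae_eq P W1 (\<lambda>\<omega>. d \<omega> + s * X0 \<omega>)" using D'E[OF a(1)] by blast
      have "ae_eq P W2 (\<lambda>\<omega>. d \<omega> + s * X0 \<omega>)" using ae_eq_trans[OF ae_eq_sym[OF a(3)] ds(2)] .
      from T'rep[OF a(2) ds(1) this] T'rep[OF a(1) ds]
      show "ae_eq P (T' W1) (T' W2)" using ae_eq_trans ae_eq_sym by metis
    qed
    show "linear_op P D' T'" unfolding linear_op_def
    proof (intro conjI ballI allI)
      fix W1 W2 assume a: "W1 \<in> D'" "W2 \<in> D'"
      obtain d1 s1 where 1: "d1 \<in> D" "ae_eq P W1 (\<lambda>\<omega>. d1 \<omega> + s1 * X0 \<omega>)" using D'E[OF a(1)] by blast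
      obtain d2 s2 where 2: "d2 \<in> D" "ae_eq P W2 (\<lambda>\<omega>. d2 \<omega> + s2 * X0 \<omega>)" using D'E[OF a(2)] by blast
      note s = D'add[OF a 1(1) 2(1) 1(2) 2(2)]
      have "ae_eq P (T' (\<lambda>\<omega>. W1 \<omega> + W2 \<omega>)) (\<lambda>\<omega>. T (\<lambda>\<omega>. d1 \<omega> + d2 \<omega>) \<omega> + (s1 + s2) * t \<omega>)"
        using s 1 2 by (intro T'rep Dadd) auto
      moreover note T'rep[OF a(1) 1] T'rep[OF a(2) 2] Tadd[OF 1(1) 2(1)]
      ultimately show "ae_eq P (T' (\<lambda>\<omega>. W1 \<omega> + W2 \<omega>)) (\<lambda>\<omega>. T' W1 \<omega> + T' W2 \<omega>)"
        unfolding ae_eq_def by eventually_elim (auto simp: algebra_simps)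
    next
      fix W c assume a: "W \<in> D'"
      obtain d s where 1: "d \<in> D" "ae_eq P W (\<lambda>\<omega>. d \<omega> + s * X0 \<omega>)" using D'E[OF a] by blast
      note s = D'sc[OF a 1, of c]
      have "ae_eq P (T' (\<lambda>\<omega>. c * W \<omega>)) (\<lambda>\<omega>. T (\<lambda>\<omega>. c * d \<omega>) \<omega> + (c * s) * t \<omega>)"
        using s 1 by (intro T'rep Dsc) auto
      moreover note T'rep[OF a 1] Tsc[OF 1(1), of c]
      ultimately show "ae_eq P (T' (\<lambda>\<omega>. c * W \<omega>)) (\<lambda>\<omega>. c * T' W \<omega>)"
        unfolding ae_eq_def by eventually_elim (auto simp: algebra_simps)
    qed
    show "\<forall>X\<in>L. ae_eq P (T' X) (x X)" using TL LD unfolding T'_def by auto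
    show "sandw D' T'" unfolding sandw_def ae_le_def
    proof (intro ballI impI)
      fix X Y Z assume X: "X \<in> D'" and Y: "Y \<in> Linf_pos P B" and Z: "Z \<in> Linf_pos P B"
        and le: "AE \<omega> in P. Z \<omega> + X \<omega> \<le> Y \<omega>"
      obtain d s where 1: "d \<in> D" "ae_eq P X (\<lambda>\<omega>. d \<omega> + s * X0 \<omega>)" using D'E[OF X] by blast
      have le2: "AE \<omega> in P. Z \<omega> + d \<omega> + s * X0 \<omega> \<le> Y \<omega>" using le 1(2) unfolding ae_eq_def
        by eventually_elim auto
      have key: "AE \<omega> in P. mop Z \<omega> + T d \<omega> + s * t \<omega> \<le> Mop Y \<omega>"
      proof (cases s "0::real" rule: linorder_cases)
        case equal
        then have "AE \<omega> in P. Z \<omega> + d \<omega> \<le> Y \<omega>" using le2 by simp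
        from TswI[OF 1(1) Y Z this] show ?thesis using equal by simp
      next
        case greater
        define c where "c = 1 / s"
        have c0: "0 \<le> c" using greater c_def by simp
        have "(\<lambda>\<omega>. Mop (\<lambda>\<omega>. c * Y \<omega>) \<omega> - mop (\<lambda>\<omega>. c * Z \<omega>) \<omega> - T (\<lambda>\<omega>. c * d \<omega>) \<omega>) \<in> Up"
          unfolding Up_def
        proof (intro CollectI exI conjI)
          show "(\<lambda>\<omega>. c * Z \<omega>) \<in> Linf_pos P B" "(\<lambda>\<omega>. c * Y \<omega>) \<in> Linf_pos P B"
            using Y Z c0 by (auto intro: Linf_pos_scale)
          show "(\<lambda>\<omega>. c * d \<omega>) \<in> D" using 1 Dsc by auto
          show "AE \<omega> in P. c * Z \<omega> + c * d \<omega> + X0 \<omega> \<le> c * Y \<omega>" using le2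
          proof eventually_elim
            case (elim \<omega>)
            then have "c * (Z \<omega> + d \<omega> + s * X0 \<omega>) \<le> c * Y \<omega>" using c0 by (intro mult_left_mono)
            then show ?case using greater unfolding c_def by (simp add: field_simps)
          qed
        qed simp
        from tup[OF this] M_hom[OF Y c0] m_hom[OF Z c0] Tsc[OF 1(1), of c]
        show ?thesis
        proof eventually_elim
          case (elim \<omega>)
          then have "t \<omega> \<le> 1/s * (Mop Y \<omega> - mop Z \<omega> - T d \<omega>)" unfolding c_def by (simp add: algebra_simps)
          from aux_pos[OF greater this] show ?case by simp
        qed
      next
        case less
        define r where "r = - s"
        have r0: "0 < r" using less r_def by simp
        define c where "c = 1 / r"
        have c0: "0 \<le> c" using r0 c_def by simp
        have "(\<lambda>\<omega>. mop (\<lambda>\<omega>. c * Z \<omega>) \<omega> + T (\<lambda>\<omega>. c * d \<omega>) \<omega> - Mop (\<lambda>\<omega>. c * Y \<omega>) \<omega>) \<in> Lo"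
          unfolding Lo_def
        proof (intro CollectI exI conjI)
          show "(\<lambda>\<omega>. c * Z \<omega>) \<in> Linf_pos P B" "(\<lambda>\<omega>. c * Y \<omega>) \<in> Linf_pos P B"
            using Y Z c0 by (auto intro: Linf_pos_scale)
          show "(\<lambda>\<omega>. c * d \<omega>) \<in> D" using 1 Dsc by auto
          show "AE \<omega> in P. c * Z \<omega> + c * d \<omega> - X0 \<omega> \<le> c * Y \<omega>" using le2
          proof eventually_elim
            case (elim \<omega>)
            then have "c * (Z \<omega> + d \<omega> + s * X0 \<omega>) \<le> c * Y \<omega>" using c0 by (intro mult_left_mono)
            moreover have "c * s = -1" using r0 unfolding c_def r_def by simp
            moreover have "c * (Z \<omega> + d \<omega> + s * X0 \<omega>) = c * Z \<omega> + c * d \<omega> + (c * s) * X0 \<omega>"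
              by (simp add: algebra_simps)
            ultimately show ?case by simp
          qed
        qed simp
        from tlo[rule_format, OF this] M_hom[OF Y c0] m_hom[OF Z c0] Tsc[OF 1(1), of c]
        show ?thesis
        proof eventually_elim
          case (elim \<omega>)
          then have "1/r * (mop Z \<omega> + T d \<omega> - Mop Y \<omega>) \<le> t \<omega>" unfolding c_def by (simp add: algebra_simps)
          from aux_pos2[OF r0 this] show ?case unfolding r_def by simp
        qed
      qed
      from key T'rep[OF X 1]
      show "AE \<omega> in P. mop Z \<omega> + T' X \<omega> \<le> Mop Y \<omega>" unfolding ae_eq_def
        by eventually_elim auto
    qed
  qed
  show ?thesis
  proof (intro exI[of _ D'] exI[of _ T'] conjI ballI)
    show "T' X = T X" if "X \<in> D" for X using that unfolding T'_def by simp
  qed (use ext' DD' X0D' in auto)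
qed

end



context setting begin

lemma init_ok: "\<exists>D T. ext_ok D T"
proof -
  interpret prob_space P by (rule ps)
  have L0: "(\<lambda>\<omega>. 0) \<in> L" and Ladd: "\<And>X Y. X \<in> L \<Longrightarrow> Y \<in> L \<Longrightarrow> (\<lambda>\<omega>. X \<omega> + Y \<omega>) \<in> L"
    and Lsc: "\<And>X c. X \<in> L \<Longrightarrow> (\<lambda>\<omega>. c * X \<omega>) \<in> L"
    using Lsub unfolding lin_subspace_def by auto
  have xval: "\<And>l. l \<in> L \<Longrightarrow> x l \<in> Linf P A"
    and xcong: "\<And>d1 d2. d1 \<in> L \<Longrightarrow> d2 \<in> L \<Longrightarrow> ae_eq P d1 d2 \<Longrightarrow> ae_eq P (x d1) (x d2)"
    using xb unfolding op_between_def by auto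
  have xadd: "\<And>d1 d2. d1 \<in> L \<Longrightarrow> d2 \<in> L \<Longrightarrow> AE \<omega> in P. x (\<lambda>\<omega>. d1 \<omega> + d2 \<omega>) \<omega> = x d1 \<omega> + x d2 \<omega>"
    and xsc: "\<And>d c. d \<in> L \<Longrightarrow> AE \<omega> in P. x (\<lambda>\<omega>. c * d \<omega>) \<omega> = c * x d \<omega>"
    using xlin unfolding linear_op_def ae_eq_def by auto
  define D0 where "D0 = {W \<in> Linf P B. \<exists>l\<in>L. ae_eq P W l}"
  define T0 where "T0 W = x (SOME l. l \<in> L \<and> ae_eq P W l)" for W
  have D0E: "\<exists>l. l \<in> L \<and> ae_eq P W l" if "W \<in> D0" for W using that unfolding D0_def by auto
  have T0rep: "ae_eq P (T0 W) (x l)" if W: "W \<in> D0" and l: "l \<in> L" "ae_eq P W l" for W l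
  proof -
    define l' where "l' = (SOME l. l \<in> L \<and> ae_eq P W l)"
    have l': "l' \<in> L \<and> ae_eq P W l'" unfolding l'_def using D0E[OF W] by (rule someI_ex)
    then have "ae_eq P l' l" using l ae_eq_trans ae_eq_sym by metis
    then show ?thesis using xcong l' l unfolding T0_def l'_def[symmetric] by auto
  qed
  have "ext_ok D0 T0" unfolding ext_ok_def
  proof (intro conjI)
    show "L \<subseteq> D0" unfolding D0_def using LLinf ae_eq_refl by auto
    show "D0 \<subseteq> Linf P B" unfolding D0_def by auto
    show "lin_subspace D0" unfolding lin_subspace_def
    proof (intro conjI ballI allI)
      show "(\<lambda>\<omega>. 0) \<in> D0" unfolding D0_def using L0 Linf_const ae_eq_refl by blast
    next
      fix W1 W2 assume a: "W1 \<in> D0" "W2 \<in> D0"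
      then obtain l1 l2 where "l1 \<in> L" "ae_eq P W1 l1" "l2 \<in> L" "ae_eq P W2 l2" using D0E by blast
      moreover have "ae_eq P (\<lambda>\<omega>. W1 \<omega> + W2 \<omega>) (\<lambda>\<omega>. l1 \<omega> + l2 \<omega>)" using calculation unfolding ae_eq_def
        by (auto elim: eventually_elim2)
      ultimately show "(\<lambda>\<omega>. W1 \<omega> + W2 \<omega>) \<in> D0" using a unfolding D0_def by (auto intro!: Linf_add Ladd)
    next
      fix W c assume a: "W \<in> D0"
      then obtain l1 where "l1 \<in> L" "ae_eq P W l1" using D0E by blast
      moreover have "ae_eq P (\<lambda>\<omega>. c * W \<omega>) (\<lambda>\<omega>. c * l1 \<omega>)" using calculation unfolding ae_eq_def
        by (auto elim: eventually_mono)
      ultimately show "(\<lambda>\<omega>. c * W \<omega>) \<in> D0" using a unfolding D0_def by (auto intro!: Linf_scale Lsc)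
    qed
    show "\<forall>W\<in>Linf P B. \<forall>d\<in>D0. ae_eq P W d \<longrightarrow> W \<in> D0"
      unfolding D0_def using ae_eq_trans by blast
    show "op_between P D0 (Linf P A) T0" unfolding op_between_def
    proof (intro conjI ballI impI)
      fix W assume "W \<in> D0"
      then show "T0 W \<in> Linf P A" unfolding T0_def using D0E[of W] xval by (metis (mono_tags, lifting) someI_ex)
    next
      fix W1 W2 assume a: "W1 \<in> D0" "W2 \<in> D0" "ae_eq P W1 W2"
      then obtain l where l: "l \<in> L" "ae_eq P W1 l" using D0E by blast
      then have "ae_eq P W2 l" using a ae_eq_trans ae_eq_sym by metis
      then show "ae_eq P (T0 W1) (T0 W2)" using T0rep[OF a(1) l] T0rep[OF a(2) l(1)] ae_eq_trans ae_eq_sym by metis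
    qed
    show "linear_op P D0 T0" unfolding linear_op_def
    proof (intro conjI ballI allI)
      fix W1 W2 assume a: "W1 \<in> D0" "W2 \<in> D0"
      then obtain l1 l2 where l: "l1 \<in> L" "ae_eq P W1 l1" "l2 \<in> L" "ae_eq P W2 l2" using D0E by blast
      moreover have e: "ae_eq P (\<lambda>\<omega>. W1 \<omega> + W2 \<omega>) (\<lambda>\<omega>. l1 \<omega> + l2 \<omega>)" using l unfolding ae_eq_def
        by (auto elim: eventually_elim2)
      moreover have "(\<lambda>\<omega>. W1 \<omega> + W2 \<omega>) \<in> D0" using a e l unfolding D0_def by (auto intro!: Linf_add Ladd)
      ultimately have "ae_eq P (T0 (\<lambda>\<omega>. W1 \<omega> + W2 \<omega>)) (x (\<lambda>\<omega>. l1 \<omega> + l2 \<omega>))"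
        by (intro T0rep Ladd) auto
      moreover note T0rep[OF a(1) l(1,2)] T0rep[OF a(2) l(3,4)] xadd[OF l(1) l(3)]
      ultimately show "ae_eq P (T0 (\<lambda>\<omega>. W1 \<omega> + W2 \<omega>)) (\<lambda>\<omega>. T0 W1 \<omega> + T0 W2 \<omega>)"
        unfolding ae_eq_def by eventually_elim auto
    next
      fix W c assume a: "W \<in> D0"
      then obtain l1 where l: "l1 \<in> L" "ae_eq P W l1" using D0E by blast
      moreover have e: "ae_eq P (\<lambda>\<omega>. c * W \<omega>) (\<lambda>\<omega>. c * l1 \<omega>)" using l unfolding ae_eq_def
        by (auto elim: eventually_mono)
      moreover have "(\<lambda>\<omega>. c * W \<omega>) \<in> D0" using a e l unfolding D0_def by (auto intro!: Linf_scale Lsc)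
      ultimately have "ae_eq P (T0 (\<lambda>\<omega>. c * W \<omega>)) (x (\<lambda>\<omega>. c * l1 \<omega>))"
        by (intro T0rep Lsc) auto
      moreover note T0rep[OF a(1) l(1,2)] xsc[OF l(1), of c]
      ultimately show "ae_eq P (T0 (\<lambda>\<omega>. c * W \<omega>)) (\<lambda>\<omega>. c * T0 W \<omega>)"
        unfolding ae_eq_def by eventually_elim auto
    qed
    show "\<forall>X\<in>L. ae_eq P (T0 X) (x X)"
    proof
      fix X assume "X \<in> L"
      moreover then have "X \<in> D0" unfolding D0_def using LLinf ae_eq_refl by auto
      ultimately show "ae_eq P (T0 X) (x X)" using T0rep ae_eq_refl by blast
    qed
    show "sandw D0 T0" unfolding sandw_def
    proof (intro ballI impI)
      fix X Y Z assume X: "X \<in> D0" and Y: "Y \<in> Linf_pos P B" and Z: "Z \<in> Linf_pos P B"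
        and le: "ae_le P (\<lambda>\<omega>. Z \<omega> + X \<omega>) Y"
      obtain l where l: "l \<in> L" "ae_eq P X l" using D0E[OF X] by blast
      have "ae_le P (\<lambda>\<omega>. Z \<omega> + l \<omega>) Y" using le l(2) unfolding ae_le_def ae_eq_def
        by (auto elim: eventually_elim2)
      then have "ae_le P (\<lambda>\<omega>. mop Z \<omega> + x l \<omega>) (Mop Y)" using hyp l Y Z by blast
      with T0rep[OF X l] show "ae_le P (\<lambda>\<omega>. mop Z \<omega> + T0 X \<omega>) (Mop Y)"
        unfolding ae_le_def ae_eq_def by (auto elim: eventually_elim2)
    qed
  qed
  then show ?thesis by blast
qed

definition gr :: "('a \<Rightarrow> real) set \<Rightarrow> (('a \<Rightarrow> real) \<Rightarrow> ('a \<Rightarrow> real)) \<Rightarrow> (('a \<Rightarrow> real) \<times> ('a \<Rightarrow> real)) set" where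
  "gr D T = (\<lambda>X. (X, T X)) ` D"

definition Fam where "Fam = {gr D T | D T. ext_ok D T}"

end



context setting begin

lemma chain_ub:
  assumes C: "C \<in> chains Fam" and Cne: "C \<noteq> {}"
  shows "\<Union>C \<in> Fam"
proof -
  have CF: "C \<subseteq> Fam" and ch: "\<And>G1 G2. G1 \<in> C \<Longrightarrow> G2 \<in> C \<Longrightarrow> G1 \<subseteq> G2 \<or> G2 \<subseteq> G1"
    using C unfolding chains_def chain_subset_def by auto
  have k1: "\<exists>D T. G = gr D T \<and> ext_ok D T" if "G \<in> C" for G using that CF unfolding Fam_def by auto
  define U where "U = \<Union>C"
  have k2: "y1 = y2" if h: "(X, y1) \<in> U" "(X, y2) \<in> U" for X y1 y2
  proof -
    obtain G1 G2 where g: "G1 \<in> C" "G2 \<in> C" "(X,y1) \<in> G1" "(X,y2) \<in> G2" using h U_def by auto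
    have fnc: "y = y'" if "G \<in> C" "(X,y) \<in> G" "(X,y') \<in> G" for G y y'
      using k1[OF that(1)] that(2,3) unfolding gr_def by auto
    from ch[OF g(1,2)] show ?thesis using fnc g by blast
  qed
  define DU where "DU = fst ` U"
  define TU where "TU X = (THE y. (X,y) \<in> U)" for X
  have k3: "TU X = y" if "(X,y) \<in> U" for X y
    unfolding TU_def using that k2 by blast
  have DsubU: "X \<in> DU \<and> TU X = T X" if "gr D T \<in> C" "X \<in> D" for D T X
  proof -
    have "(X, T X) \<in> U" using that unfolding U_def gr_def by blast
    then show ?thesis using k3 unfolding DU_def by force
  qed
  have k4: "\<exists>D T. gr D T \<in> C \<and> ext_ok D T \<and> X1 \<in> D \<and> X2 \<in> D" if h: "X1 \<in> DU" "X2 \<in> DU" for X1 X2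
  proof -
    obtain G1 G2 y1 y2 where g: "G1 \<in> C" "G2 \<in> C" "(X1,y1) \<in> G1" "(X2,y2) \<in> G2"
      using h unfolding DU_def U_def by force
    then obtain G where G: "G \<in> C" "(X1,y1) \<in> G" "(X2,y2) \<in> G" using ch[OF g(1,2)] by blast
    obtain D T where "G = gr D T" "ext_ok D T" using k1[OF G(1)] by blast
    then show ?thesis using G unfolding gr_def by auto
  qed
  obtain G0 where G0: "G0 \<in> C" using Cne by auto
  obtain D0 T0 where D0: "G0 = gr D0 T0" "ext_ok D0 T0" using k1[OF G0] by blast
  have grU: "gr DU TU = U"
  proof
    show "gr DU TU \<subseteq> U"
    proof
      fix p assume "p \<in> gr DU TU"
      then obtain X where X: "X \<in> DU" "p = (X, TU X)" unfolding gr_def by auto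
      then obtain y where "(X,y) \<in> U" unfolding DU_def by auto
      then show "p \<in> U" using k3 X by auto
    qed
    show "U \<subseteq> gr DU TU"
    proof
      fix p assume "p \<in> U"
      then obtain X y where "p = (X,y)" "(X,y) \<in> U" by (cases p) auto
      then show "p \<in> gr DU TU" unfolding gr_def DU_def using k3 by force
    qed
  qed
  have ok: "ext_ok DU TU" unfolding ext_ok_def
  proof (intro conjI)
    show "L \<subseteq> DU"
    proof
      fix X assume "X \<in> L"
      then have XD: "X \<in> D0" using D0(2) unfolding ext_ok_def by blast
      show "X \<in> DU" using DsubU[OF _ XD] G0 D0(1) by simp
    qed
    show "DU \<subseteq> Linf P B"
    proof
      fix X assume h: "X \<in> DU"
      obtain D T where a: "gr D T \<in> C" "ext_ok D T" "X \<in> D" using k4[OF h h] by blast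
      then show "X \<in> Linf P B" unfolding ext_ok_def by blast
    qed
    show "lin_subspace DU" unfolding lin_subspace_def
    proof (intro conjI ballI allI)
      have ZD: "(\<lambda>\<omega>. 0) \<in> D0" using D0(2) unfolding ext_ok_def lin_subspace_def by blast
      show "(\<lambda>\<omega>. 0) \<in> DU" using DsubU[OF _ ZD] G0 D0(1) by simp
    next
      fix X1 X2 assume h: "X1 \<in> DU" "X2 \<in> DU"
      obtain D T where a: "gr D T \<in> C" "ext_ok D T" "X1 \<in> D" "X2 \<in> D" using k4[OF h] by blast
      have s: "(\<lambda>\<omega>. X1 \<omega> + X2 \<omega>) \<in> D" using a(2-4) unfolding ext_ok_def lin_subspace_def by blast
      then show "(\<lambda>\<omega>. X1 \<omega> + X2 \<omega>) \<in> DU" using DsubU[OF a(1) s] by simp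
    next
      fix X1 c assume h: "X1 \<in> DU"
      obtain D T where a: "gr D T \<in> C" "ext_ok D T" "X1 \<in> D" using k4[OF h h] by blast
      have s: "(\<lambda>\<omega>. c * X1 \<omega>) \<in> D" using a(2-3) unfolding ext_ok_def lin_subspace_def by blast
      then show "(\<lambda>\<omega>. c * X1 \<omega>) \<in> DU" using DsubU[OF a(1) s] by simp
    qed
    show "\<forall>W\<in>Linf P B. \<forall>d\<in>DU. ae_eq P W d \<longrightarrow> W \<in> DU"
    proof (intro ballI impI)
      fix W d assume h: "W \<in> Linf P B" "d \<in> DU" "ae_eq P W d"
      obtain D T where a: "gr D T \<in> C" "ext_ok D T" "d \<in> D" using k4[OF h(2) h(2)] by blast
      have s: "W \<in> D" using a(2,3) h(1,3) unfolding ext_ok_def by blast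
      then show "W \<in> DU" using DsubU[OF a(1) s] by simp
    qed
    show "op_between P DU (Linf P A) TU" unfolding op_between_def
    proof (intro conjI ballI impI)
      fix X1 assume "X1 \<in> DU"
      then obtain D T where a: "gr D T \<in> C" "ext_ok D T" "X1 \<in> D" using k4 by blast
      have "T X1 \<in> Linf P A" using a(2,3) unfolding ext_ok_def op_between_def by blast
      then show "TU X1 \<in> Linf P A" using DsubU[OF a(1,3)] by simp
    next
      fix X1 X2 assume h: "X1 \<in> DU" "X2 \<in> DU" "ae_eq P X1 X2"
      obtain D T where a: "gr D T \<in> C" "ext_ok D T" "X1 \<in> D" "X2 \<in> D" using k4[OF h(1,2)] by blast
      have "ae_eq P (T X1) (T X2)" using a(2,3,4) h(3) unfolding ext_ok_def op_between_def by blast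
      then show "ae_eq P (TU X1) (TU X2)" using DsubU[OF a(1,3)] DsubU[OF a(1,4)] by simp
    qed
    show "linear_op P DU TU" unfolding linear_op_def
    proof (intro conjI ballI allI)
      fix X1 X2 assume h: "X1 \<in> DU" "X2 \<in> DU"
      obtain D T where a: "gr D T \<in> C" "ext_ok D T" "X1 \<in> D" "X2 \<in> D" using k4[OF h] by blast
      have s: "(\<lambda>\<omega>. X1 \<omega> + X2 \<omega>) \<in> D" using a(2-4) unfolding ext_ok_def lin_subspace_def by blast
      have "ae_eq P (T (\<lambda>\<omega>. X1 \<omega> + X2 \<omega>)) (\<lambda>\<omega>. T X1 \<omega> + T X2 \<omega>)"
        using a(2-4) unfolding ext_ok_def linear_op_def by blast
      then show "ae_eq P (TU (\<lambda>\<omega>. X1 \<omega> + X2 \<omega>)) (\<lambda>\<omega>. TU X1 \<omega> + TU X2 \<omega>)"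
        using DsubU[OF a(1) s] DsubU[OF a(1,3)] DsubU[OF a(1,4)] by simp
    next
      fix X1 c assume h: "X1 \<in> DU"
      obtain D T where a: "gr D T \<in> C" "ext_ok D T" "X1 \<in> D" using k4[OF h h] by blast
      have s: "(\<lambda>\<omega>. c * X1 \<omega>) \<in> D" using a(2-3) unfolding ext_ok_def lin_subspace_def by blast
      have "ae_eq P (T (\<lambda>\<omega>. c * X1 \<omega>)) (\<lambda>\<omega>. c * T X1 \<omega>)"
        using a(2-3) unfolding ext_ok_def linear_op_def by blast
      then show "ae_eq P (TU (\<lambda>\<omega>. c * X1 \<omega>)) (\<lambda>\<omega>. c * TU X1 \<omega>)"
        using DsubU[OF a(1) s] DsubU[OF a(1,3)] by simp
    qed
    show "\<forall>X\<in>L. ae_eq P (TU X) (x X)"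
    proof
      fix X assume X: "X \<in> L"
      have XD: "X \<in> D0" using X D0(2) unfolding ext_ok_def by blast
      have "ae_eq P (T0 X) (x X)" using X D0(2) unfolding ext_ok_def by blast
      then show "ae_eq P (TU X) (x X)" using DsubU[OF _ XD] G0 D0(1) by simp
    qed
    show "sandw DU TU" unfolding sandw_def
    proof (intro ballI impI)
      fix X Y Z assume h: "X \<in> DU" "Y \<in> Linf_pos P B" "Z \<in> Linf_pos P B" "ae_le P (\<lambda>\<omega>. Z \<omega> + X \<omega>) Y"
      obtain D T where a: "gr D T \<in> C" "ext_ok D T" "X \<in> D" using k4[OF h(1) h(1)] by blast
      have "ae_le P (\<lambda>\<omega>. mop Z \<omega> + T X \<omega>) (Mop Y)"
        using a(2,3) h(2-4) unfolding ext_ok_def sandw_def by blast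
      then show "ae_le P (\<lambda>\<omega>. mop Z \<omega> + TU X \<omega>) (Mop Y)"
        using DsubU[OF a(1,3)] by simp
    qed
  qed
  show ?thesis using ok grU unfolding Fam_def U_def by blast
qed

lemma exists_full: "\<exists>T. ext_ok (Linf P B) T"
proof -
  have "\<forall>C\<in>chains Fam. \<exists>U\<in>Fam. \<forall>X\<in>C. X \<subseteq> U"
  proof
    fix C assume C: "C \<in> chains Fam"
    show "\<exists>U\<in>Fam. \<forall>X\<in>C. X \<subseteq> U"
    proof (cases "C = {}")
      case True
      obtain D T where "ext_ok D T" using init_ok by blast
      then have "gr D T \<in> Fam" unfolding Fam_def by blast
      then show ?thesis using True by blast
    next
      case False
      then show ?thesis using chain_ub[OF C] by blast
    qed
  qed
  from Zorn_Lemma2[OF this] obtain M where M: "M \<in> Fam" "\<forall>X\<in>Fam. M \<subseteq> X \<longrightarrow> X = M" by blast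
  obtain D T where DT: "M = gr D T" "ext_ok D T" using M(1) unfolding Fam_def by blast
  have "D = Linf P B"
  proof (rule ccontr)
    assume "D \<noteq> Linf P B"
    moreover have "D \<subseteq> Linf P B" using DT unfolding ext_ok_def by blast
    ultimately obtain X0 where X0: "X0 \<in> Linf P B" "X0 \<notin> D" by blast
    obtain D' T' where e: "ext_ok D' T'" "D \<subseteq> D'" "X0 \<in> D'" "\<forall>X\<in>D. T' X = T X"
      using one_step[OF DT(2) X0] by blast
    have "gr D' T' \<in> Fam" using e unfolding Fam_def by blast
    moreover have "M \<subseteq> gr D' T'" using DT e unfolding gr_def by force
    ultimately have "gr D' T' = gr D T" using M DT by blast
    moreover have "(X0, T' X0) \<in> gr D' T'" using e unfolding gr_def by auto
    ultimately show False using X0 unfolding gr_def by auto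
  qed
  then show ?thesis using DT by blast
qed

end



lemma squeeze_aux:
  fixes a m :: "nat \<Rightarrow> real"
  assumes "m \<longlonglongrightarrow> 0" "\<forall>n. 0 \<le> a n - b \<and> a n - b \<le> m n" "\<forall>n. a (Suc n) \<le> a n"
  shows "decseq a \<and> a \<longlonglongrightarrow> b"
proof
  show "decseq a" unfolding decseq_Suc_iff using assms(3) by blast
  have "(\<lambda>n. a n - b) \<longlonglongrightarrow> 0"
    by (rule real_tendsto_sandwich[OF _ _ tendsto_const assms(1)]) (use assms(2) in \<open>auto intro!: always_eventually\<close>)
  then show "a \<longlonglongrightarrow> b" by (rule Lim_transform[OF tendsto_const])
qed

context setting begin

lemma main:
  "\<exists>x'. (\<forall>X\<in>L. ae_eq P (x' X) (x X)) \<and>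
           op_between P (Linf P B) (Linf P A) x' \<and>
           linear_op P (Linf P B) x' \<and>
           monotone_op P (Linf P B) x' \<and>
           cont_above_op P (Linf P B) x' \<and>
           (\<forall>X\<in>Linf P B. \<forall>Y\<in>Linf_pos P B. \<forall>Z\<in>Linf_pos P B.
              ae_le P (\<lambda>\<omega>. Z \<omega> + X \<omega>) Y \<longrightarrow> ae_le P (\<lambda>\<omega>. mop Z \<omega> + x' X \<omega>) (Mop Y)) \<and>
           (\<forall>X\<in>Linf_pos P B. ae_le P (mop X) (x' X) \<and> ae_le P (x' X) (Mop X))"
proof -
  interpret prob_space P by (rule ps)
  obtain T where ok: "ext_ok (Linf P B) T" using exists_full by blast
  have Tb: "op_between P (Linf P B) (Linf P A) T" and Tlin: "linear_op P (Linf P B) T"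
    and TL: "\<forall>X\<in>L. ae_eq P (T X) (x X)" and Tsw: "sandw (Linf P B) T"
    using ok unfolding ext_ok_def by auto
  have Tadd: "\<And>d1 d2. d1 \<in> Linf P B \<Longrightarrow> d2 \<in> Linf P B \<Longrightarrow> AE \<omega> in P. T (\<lambda>\<omega>. d1 \<omega> + d2 \<omega>) \<omega> = T d1 \<omega> + T d2 \<omega>"
    and Tsc: "\<And>d c. d \<in> Linf P B \<Longrightarrow> AE \<omega> in P. T (\<lambda>\<omega>. c * d \<omega>) \<omega> = c * T d \<omega>"
    using Tlin unfolding linear_op_def ae_eq_def by auto
  have TswI: "\<And>X Y Z. X \<in> Linf P B \<Longrightarrow> Y \<in> Linf_pos P B \<Longrightarrow> Z \<in> Linf_pos P B \<Longrightarrow>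
     AE \<omega> in P. Z \<omega> + X \<omega> \<le> Y \<omega> \<Longrightarrow> AE \<omega> in P. mop Z \<omega> + T X \<omega> \<le> Mop Y \<omega>"
    using Tsw unfolding sandw_def ae_le_def by auto
  have Tdiff: "AE \<omega> in P. T (\<lambda>\<omega>. X \<omega> - Y \<omega>) \<omega> = T X \<omega> - T Y \<omega>"
    if X: "X \<in> Linf P B" and Y: "Y \<in> Linf P B" for X Y
  proof -
    have eq: "(\<lambda>\<omega>. X \<omega> - Y \<omega>) = (\<lambda>\<omega>. X \<omega> + (\<lambda>\<omega>. (-1) * Y \<omega>) \<omega>)" by auto
    have "(\<lambda>\<omega>. (-1) * Y \<omega>) \<in> Linf P B" using Linf_scale[OF Y] .
    from Tadd[OF X this] Tsc[OF Y, of "-1"] show ?thesis unfolding eq by eventually_elim simp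
  qed
  have m0: "AE \<omega> in P. mop (\<lambda>\<omega>. 0) \<omega> = 0" using m_hom[OF Linf_pos_zero, of 0] by simp
  have M0: "AE \<omega> in P. Mop (\<lambda>\<omega>. 0) \<omega> = 0" using M_hom[OF Linf_pos_zero, of 0] by simp
  have upper: "AE \<omega> in P. T X \<omega> \<le> Mop X \<omega>" if X: "X \<in> Linf_pos P B" for X
  proof -
    have "AE \<omega> in P. mop (\<lambda>\<omega>. 0) \<omega> + T X \<omega> \<le> Mop X \<omega>"
      using X by (intro TswI Linf_pos_Linf Linf_pos_zero) auto
    with m0 show ?thesis by eventually_elim auto
  qed
  have lower: "AE \<omega> in P. mop X \<omega> \<le> T X \<omega>" if X: "X \<in> Linf_pos P B" for X
  proof -
    have XB: "X \<in> Linf P B" using Linf_pos_Linf[OF X] .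
    have "AE \<omega> in P. mop X \<omega> + T (\<lambda>\<omega>. (-1) * X \<omega>) \<omega> \<le> Mop (\<lambda>\<omega>. 0) \<omega>"
      using X XB by (intro TswI Linf_scale Linf_pos_zero) auto
    with M0 Tsc[OF XB, of "-1"] show ?thesis by eventually_elim auto
  qed
  have mono: "AE \<omega> in P. T Y \<omega> \<le> T X \<omega>"
    if X: "X \<in> Linf P B" and Y: "Y \<in> Linf P B" and le: "AE \<omega> in P. Y \<omega> \<le> X \<omega>" for X Y
  proof -
    have W: "(\<lambda>\<omega>. X \<omega> - Y \<omega>) \<in> Linf_pos P B"
      using Linf_diff[OF X Y] le by (intro Linf_posI) (auto elim: eventually_mono)
    from lower[OF W] Linf_pos_nn[OF m_val[OF W]] Tdiff[OF X Y] show ?thesis by eventually_elim auto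
  qed
  show ?thesis
  proof (intro exI[of _ T] conjI)
    show "\<forall>X\<in>L. ae_eq P (T X) (x X)" by (rule TL)
    show "op_between P (Linf P B) (Linf P A) T" by (rule Tb)
    show "linear_op P (Linf P B) T" by (rule Tlin)
    show "monotone_op P (Linf P B) T" unfolding monotone_op_def ae_le_def by (intro ballI impI mono)
    show "\<forall>X\<in>Linf P B. \<forall>Y\<in>Linf_pos P B. \<forall>Z\<in>Linf_pos P B.
              ae_le P (\<lambda>\<omega>. Z \<omega> + X \<omega>) Y \<longrightarrow> ae_le P (\<lambda>\<omega>. mop Z \<omega> + T X \<omega>) (Mop Y)"
      using Tsw unfolding sandw_def .
    show "\<forall>X\<in>Linf_pos P B. ae_le P (mop X) (T X) \<and> ae_le P (T X) (Mop X)"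
      using lower upper unfolding ae_le_def by blast
    show "cont_above_op P (Linf P B) T" unfolding cont_above_op_def
    proof (intro allI impI)
      fix Xs :: "nat \<Rightarrow> 'a \<Rightarrow> real" and X
      assume Xs: "\<forall>n. Xs n \<in> Linf P B" and X: "X \<in> Linf P B"
        and conv: "AE \<omega> in P. decseq (\<lambda>n. Xs n \<omega>) \<and> (\<lambda>n. Xs n \<omega>) \<longlonglongrightarrow> X \<omega>"
      define W where "W n = (\<lambda>\<omega>. Xs n \<omega> - X \<omega>)" for n
      have W: "W n \<in> Linf_pos P B" for n
      proof (rule Linf_posI)
        show "W n \<in> Linf P B" unfolding W_def using Xs X by (auto intro: Linf_diff)
        show "AE \<omega> in P. 0 \<le> W n \<omega>" using conv
        proof eventually_elim
          case (elim \<omega>)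
          then have "X \<omega> \<le> Xs n \<omega>" using decseq_ge by blast
          then show ?case unfolding W_def by simp
        qed
      qed
      have dec: "AE \<omega> in P. decseq (\<lambda>n. W n \<omega>) \<and> (\<lambda>n. W n \<omega>) \<longlonglongrightarrow> 0" using conv
      proof eventually_elim
        case (elim \<omega>)
        then have "(\<lambda>n. Xs n \<omega> - X \<omega>) \<longlonglongrightarrow> X \<omega> - X \<omega>" by (intro tendsto_diff) auto
        moreover have "decseq (\<lambda>n. Xs n \<omega> - X \<omega>)"
          using elim unfolding decseq_Suc_iff by simp
        ultimately show ?case unfolding W_def by simp
      qed
      have Wall: "\<forall>n. W n \<in> Linf_pos P B" using W by blast
      have Mconv: "AE \<omega> in P. (\<lambda>n. Mop (W n) \<omega>) \<longlonglongrightarrow> 0"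
        using Mreg unfolding regular_op_def using Wall dec by blast
      have A1: "AE \<omega> in P. \<forall>n. 0 \<le> T (Xs n) \<omega> - T X \<omega> \<and> T (Xs n) \<omega> - T X \<omega> \<le> Mop (W n) \<omega>"
      proof (subst AE_all_countable, intro allI)
        fix n
        from lower[OF W[of n]] upper[OF W[of n]] Linf_pos_nn[OF m_val[OF W[of n]]] Tdiff[OF Xs[rule_format, of n] X, folded W_def]
        show "AE \<omega> in P. 0 \<le> T (Xs n) \<omega> - T X \<omega> \<and> T (Xs n) \<omega> - T X \<omega> \<le> Mop (W n) \<omega>"
          by eventually_elim linarith
      qed
      have A2: "AE \<omega> in P. \<forall>n. T (Xs (Suc n)) \<omega> \<le> T (Xs n) \<omega>"
      proof (subst AE_all_countable, intro allI)
        fix n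
        have "AE \<omega> in P. Xs (Suc n) \<omega> \<le> Xs n \<omega>" using conv
          by eventually_elim (simp add: decseq_Suc_iff)
        then show "AE \<omega> in P. T (Xs (Suc n)) \<omega> \<le> T (Xs n) \<omega>"
          by (rule mono[OF Xs[rule_format] Xs[rule_format]])
      qed
      have all: "AE \<omega> in P. ((\<lambda>n. Mop (W n) \<omega>) \<longlonglongrightarrow> 0) \<and>
          (\<forall>n. 0 \<le> T (Xs n) \<omega> - T X \<omega> \<and> T (Xs n) \<omega> - T X \<omega> \<le> Mop (W n) \<omega>) \<and>
          (\<forall>n. T (Xs (Suc n)) \<omega> \<le> T (Xs n) \<omega>)"
        by (intro eventually_conj Mconv A1 A2)
      show "AE \<omega> in P. decseq (\<lambda>n. T (Xs n) \<omega>) \<and> (\<lambda>n. T (Xs n) \<omega>) \<longlonglongrightarrow> T X \<omega>"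
        by (rule eventually_mono[OF all], rule squeeze_aux, blast+)
    qed
  qed
qed

end

theorem theorem3p11:
  fixes P \<A> \<B> :: "'a measure"
    and L :: "('a \<Rightarrow> real) set"
    and Mop mop x :: "('a \<Rightarrow> real) \<Rightarrow> ('a \<Rightarrow> real)"
  assumes "prob_space P" and "complete_measure P"
    and "subalgebra P \<A>" and "subalgebra P \<B>" and "sets \<A> \<subseteq> sets \<B>"
    and "\<exists>G. countable G \<and> G \<subseteq> sets P \<and>
           sets \<B> = sigma_sets (space P) (G \<union> null_sets P)"
    and "lin_subspace L" and "L \<subseteq> Linf P \<B>"
    and "op_between P (Linf_pos P \<B>) (Linf_pos P \<A>) Mop"
    and "sublinear_op P (Linf_pos P \<B>) Mop" and "regular_op P (Linf_pos P \<B>) Mop"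
    and "op_between P (Linf_pos P \<B>) (Linf_pos P \<A>) mop"
    and "superlinear_op P (Linf_pos P \<B>) mop"
    and "op_between P L (Linf P \<A>) x" and "linear_op P L x"
    and "\<forall>X\<in>L. \<forall>Y\<in>Linf_pos P \<B>. \<forall>Z\<in>Linf_pos P \<B>.
           ae_le P (\<lambda>\<omega>. Z \<omega> + X \<omega>) Y \<longrightarrow> ae_le P (\<lambda>\<omega>. mop Z \<omega> + x X \<omega>) (Mop Y)"
  shows "\<exists>x'. (\<forall>X\<in>L. ae_eq P (x' X) (x X)) \<and>
           op_between P (Linf P \<B>) (Linf P \<A>) x' \<and>
           linear_op P (Linf P \<B>) x' \<and>
           monotone_op P (Linf P \<B>) x' \<and>
           cont_above_op P (Linf P \<B>) x' \<and>
           (\<forall>X\<in>Linf P \<B>. \<forall>Y\<in>Linf_pos P \<B>. \<forall>Z\<in>Linf_pos P \<B>.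
              ae_le P (\<lambda>\<omega>. Z \<omega> + X \<omega>) Y \<longrightarrow> ae_le P (\<lambda>\<omega>. mop Z \<omega> + x' X \<omega>) (Mop Y)) \<and>
           (\<forall>X\<in>Linf_pos P \<B>. ae_le P (mop X) (x' X) \<and> ae_le P (x' X) (Mop X))"
proof -
  interpret setting P \<A> \<B> L Mop mop x
    by (rule setting.intro[OF assms(1,3,4,7-16)])
  show ?thesis by (rule main)
qed


end
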